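(* Let $S$ be any connected shape whose nodes occupy $l$ rows and $w$ columns of the grid. Then, in the adjacency graph model with cycle-breaking growth processes and neighbor handover allowed, there is a growth process that grows $S$ from a single node in $O(\log l+\log w)$ time steps.
   Context: Shapes. Grid points are integer pairs $(x,y)$; two grid points are adjacent if they are at orthogonal (Manhattan) distance $1$. A shape $S=(V,E)$ is a finite connected graph whose nodes occupy distinct grid points and whose edges join only pairs of nodes occupying adjacent points; shapes are considered up to translation. The adjacency closure $AC(S)$ is obtained from $S$ by adding an edge between every pair of adjacent nodes that are not yet joined. Growth operations. One node, the anchor $u_0$, is stationary; other nodes move relative to it. A growth operation on a node $u$ toward an adjacent grid point $p$ either (i) if $u$ has no edge to $p$, creates a new node $u'$ at $p$ with edge $uu'$; or (ii) if $p$ is occupied by a node $v$ with $uv\in E$, creates a new node $u'$ at $p$, replaces edge $uv$ by edges $uu',u'v$, and translates by one unit, along the axis of $uv$, the part of a spanning tree rooted at $u_0$ hanging from whichever of $u,v$ is farther from $u_0$, away from the other endpoint. With neighbor handover, in addition any neighbor $w$ of $u$ lying in a direction perpendicular to $uu'$ may be handed over to $u'$ (become joined to $u'$ instead of $u$) by a unit translation parallel to $uu'$ of the subtree of whichever of $u,w$ is farther from $u_0$. In one time step a set of operations is applied concurrently, each node receiving at most one operation and all operations having the same cardinal direction; the displacement of each node is the sum of the unit vectors contributed by the operations on its path to $u_0$ in a spanning tree rooted at $u_0$. The set is collision-free if no two nodes collide during these motions or end at the same point, and for every cycle and every two of its nodes the displacements accumulated along the two paths of the cycle between them are equal. Growth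 processes. A cycle-breaking growth process in the adjacency graph model starts from $S_1^b=S_0$; in each time step $t$ it first deletes a (possibly empty) subset of edges of $S_t^b$ whose removal keeps the shape connected, then applies a collision-free set of growth operations, obtaining $S_t^e$, and sets $S_{t+1}^b=AC(S_t^e)$. It grows $S$ in $t_f$ steps if the shape after step $t_f$ is $S$. *)

theory Defs
  imports Complex_Main
begin

type_synonym pt = "int \<times> int"

(* a shape: (set of occupied grid points = nodes, set of edges as 2-element point sets) *)
type_synonym shape = "pt set \<times> pt set set"

definition padd :: "pt \<Rightarrow> pt \<Rightarrow> pt" where
  "padd p q = (fst p + fst q, snd p + snd q)"

definition psub :: "pt \<Rightarrow> pt \<Rightarrow> pt" where
  "psub p q = (fst p - fst q, snd p - snd q)"

definition adj :: "pt \<Rightarrow> pt \<Rightarrow> bool" where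
  "adj p q \<longleftrightarrow> \<bar>fst p - fst q\<bar> + \<bar>snd p - snd q\<bar> = 1"

definition grid_edges :: "pt set \<Rightarrow> pt set set" where
  "grid_edges V = {{p, q} | p q. p \<in> V \<and> q \<in> V \<and> adj p q}"

definition graph_connected :: "pt set \<Rightarrow> pt set set \<Rightarrow> bool" where
  "graph_connected V E \<longleftrightarrow>
     (\<forall>p\<in>V. \<forall>q\<in>V. (p, q) \<in> {(a, b). {a, b} \<in> E}\<^sup>*)"

definition is_shape :: "shape \<Rightarrow> bool" where
  "is_shape S \<longleftrightarrow> finite (fst S) \<and> fst S \<noteq> {} \<and> snd S \<subseteq> grid_edges (fst S)
                 \<and> graph_connected (fst S) (snd S)"

definition AC :: "shape \<Rightarrow> shape" where
  "AC S = (fst S, snd S \<union> grid_edges (fst S))"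

definition translate :: "pt \<Rightarrow> shape \<Rightarrow> shape" where
  "translate c S = (padd c ` fst S, (\<lambda>e. padd c ` e) ` snd S)"

definition same_shape :: "shape \<Rightarrow> shape \<Rightarrow> bool" where
  "same_shape S T \<longleftrightarrow> (\<exists>c. T = translate c S)"

definition single_node :: shape where
  "single_node = ({(0, 0)}, {})"

definition num_rows :: "shape \<Rightarrow> nat" where
  "num_rows S = card (snd ` fst S)"

definition num_cols :: "shape \<Rightarrow> nat" where
  "num_cols S = card (fst ` fst S)"

definition unit_dirs :: "pt set" where
  "unit_dirs = {(1, 0), (-1, 0), (0, 1), (0, -1)}"

definition perp :: "pt \<Rightarrow> pt \<Rightarrow> bool" where
  "perp a b \<longleftrightarrow> fst a * fst b + snd a * snd b = 0"

(* Nodes after the step: Inl a = pre-existing node at a; Inr u = node u' created by the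
   operation on u.  Ops = nodes receiving an operation (all in direction d);
   H u = neighbours of u handed over to u'. *)
definition valid_ops :: "pt set \<Rightarrow> pt set set \<Rightarrow> pt \<Rightarrow> pt set \<Rightarrow> (pt \<Rightarrow> pt set) \<Rightarrow> bool" where
  "valid_ops V E d Ops H \<longleftrightarrow> d \<in> unit_dirs \<and> Ops \<subseteq> V \<and>
     (\<forall>u\<in>Ops. H u \<subseteq> {w. {u, w} \<in> E \<and> perp (psub w u) d})"

definition step_nodes :: "pt set \<Rightarrow> pt set \<Rightarrow> (pt + pt) set" where
  "step_nodes V Ops = Inl ` V \<union> Inr ` Ops"

(* edges of the graph after the operations, each with the required relative offset
   (final position of 2nd node minus final position of 1st node) *)
definition step_edges ::
  "pt set set \<Rightarrow> pt \<Rightarrow> pt set \<Rightarrow> (pt \<Rightarrow> pt set) \<Rightarrow> ((pt + pt) \<times> (pt + pt) \<times> pt) set" where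
  "step_edges E d Ops H =
     {(Inl a, Inl b, psub b a) | a b. {a, b} \<in> E
         \<and> \<not> (a \<in> Ops \<and> b = padd a d) \<and> \<not> (b \<in> Ops \<and> a = padd b d)
         \<and> \<not> (a \<in> Ops \<and> b \<in> H a) \<and> \<not> (b \<in> Ops \<and> a \<in> H b)}
   \<union> {(Inl u, Inr u, d) | u. u \<in> Ops}
   \<union> {(Inr u, Inl (padd u d), d) | u. u \<in> Ops \<and> {u, padd u d} \<in> E}
   \<union> {(Inr u, Inl w, psub w u) | u w. u \<in> Ops \<and> w \<in> H u}"

definition start_pos :: "pt + pt \<Rightarrow> pt" where
  "start_pos x = case_sum id id x"

definition traj :: "(pt + pt \<Rightarrow> pt) \<Rightarrow> pt + pt \<Rightarrow> real \<Rightarrow> real \<times> real" where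
  "traj p x s =
     (real_of_int (fst (start_pos x)) + s * real_of_int (fst (p x) - fst (start_pos x)),
      real_of_int (snd (start_pos x)) + s * real_of_int (snd (p x) - snd (start_pos x)))"

(* p: final positions.  Consistency of p with all edge offsets is the cycle condition;
   the trajectory condition excludes collisions during the motion and at the end. *)
definition collision_free ::
  "pt set \<Rightarrow> pt set set \<Rightarrow> pt \<Rightarrow> pt set \<Rightarrow> (pt \<Rightarrow> pt set) \<Rightarrow> (pt + pt \<Rightarrow> pt) \<Rightarrow> bool" where
  "collision_free V E d Ops H p \<longleftrightarrow>
     (\<forall>(x, y, off) \<in> step_edges E d Ops H. psub (p y) (p x) = off) \<and>
     (\<forall>x\<in>step_nodes V Ops. \<forall>y\<in>step_nodes V Ops. x \<noteq> y \<longrightarrow>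
        (\<forall>s::real. 0 < s \<and> s \<le> 1 \<longrightarrow> traj p x s \<noteq> traj p y s))"

definition growth_step :: "shape \<Rightarrow> shape \<Rightarrow> bool" where
  "growth_step S S' \<longleftrightarrow>
     (\<exists>d Ops H p. valid_ops (fst S) (snd S) d Ops H \<and> collision_free (fst S) (snd S) d Ops H p \<and>
        S' = (p ` step_nodes (fst S) Ops,
              {{p x, p y} | x y off. (x, y, off) \<in> step_edges (snd S) d Ops H}))"

definition cb_step :: "shape \<Rightarrow> shape \<Rightarrow> bool" where
  "cb_step Sb Se \<longleftrightarrow>
     (\<exists>E'. E' \<subseteq> snd Sb \<and> graph_connected (fst Sb) E' \<and> growth_step (fst Sb, E') Se)"

(* grows S from S0 in tf steps; the shape after step tf is S_tf^e *)
definition grows_in :: "shape \<Rightarrow> shape \<Rightarrow> nat \<Rightarrow> bool" where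
  "grows_in S0 S tf \<longleftrightarrow> 1 \<le> tf \<and>
     (\<exists>Sb Se :: nat \<Rightarrow> shape. Sb 1 = S0 \<and>
        (\<forall>t\<in>{1..tf}. cb_step (Sb t) (Se t) \<and> Sb (Suc t) = AC (Se t)) \<and>
        same_shape (Se tf) S)"

end

theory Submission
  imports Defs
begin

lemma adj_sym: "adj p q \<longleftrightarrow> adj q p"
  unfolding adj_def by auto

lemma adj_irrefl: "\<not> adj p p" unfolding adj_def by auto

lemma grid_edges_mem: "{a,b} \<in> grid_edges V \<longleftrightarrow> a \<in> V \<and> b \<in> V \<and> adj a b"
  unfolding grid_edges_def
  by (auto simp: doubleton_eq_iff adj_sym; metis prod.collapse)

lemma grid_edges_elem: "e \<in> grid_edges V \<Longrightarrow> \<exists>a b. e = {a,b} \<and> a \<in> V \<and> b \<in> V \<and> adj a b"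
  unfolding grid_edges_def by auto

lemma graph_connected_mono: "graph_connected V E \<Longrightarrow> E \<subseteq> E' \<Longrightarrow> graph_connected V E'"
proof -
  assume g: "graph_connected V E" and s: "E \<subseteq> E'"
  have "{(a, b). {a, b} \<in> E} \<subseteq> {(a, b). {a, b} \<in> E'}" using s by auto
  then have "{(a, b). {a, b} \<in> E}\<^sup>* \<subseteq> {(a, b). {a, b} \<in> E'}\<^sup>*" by (rule rtrancl_mono)
  then show ?thesis using g unfolding graph_connected_def by blast
qed

lemma step_edges_noops: "step_edges E d {} H = {(Inl a, Inl b, psub b a) | a b. {a,b} \<in> E}"
  unfolding step_edges_def by auto

lemma translate_growth:
  assumes "E' \<subseteq> grid_edges V"
  shows "growth_step (V, E') (padd c ` V, (\<lambda>e. padd c ` e) ` E')"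
proof -
  define p where "p = (\<lambda>n. padd c (start_pos n))"
  have vo: "valid_ops V E' (1,0) {} (\<lambda>_. {})" unfolding valid_ops_def unit_dirs_def by auto
  have cf: "collision_free V E' (1,0) {} (\<lambda>_. {}) p"
    unfolding collision_free_def
  proof (intro conjI ballI allI impI)
    fix x assume "x \<in> step_edges E' (1,0) {} (\<lambda>_. {})"
    then show "case x of (x, y, off) \<Rightarrow> psub (p y) (p x) = off"
      unfolding step_edges_noops p_def by (auto simp: psub_def padd_def start_pos_def)
  next
    fix x y and s :: real
    assume x: "x \<in> step_nodes V {}" and y: "y \<in> step_nodes V {}" and xy: "x \<noteq> y" and s: "0 < s \<and> s \<le> 1"
    from x obtain a where a: "x = Inl a" unfolding step_nodes_def by auto
    from y obtain b where b: "y = Inl b" unfolding step_nodes_def by auto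
    from xy a b have ab: "a \<noteq> b" by auto
    show "traj p x s \<noteq> traj p y s"
    proof
      assume "traj p x s = traj p y s"
      then have "real_of_int (fst a) = real_of_int (fst b) \<and> real_of_int (snd a) = real_of_int (snd b)"
        unfolding traj_def a b p_def by (auto simp: padd_def start_pos_def algebra_simps)
      then have "fst a = fst b \<and> snd a = snd b" by linarith
      with ab show False by (simp add: prod_eq_iff)
    qed
  qed
  have nodes: "p ` step_nodes V {} = padd c ` V"
    unfolding p_def step_nodes_def by (simp add: image_image start_pos_def)
  have edges: "{{p x, p y} | x y off. (x, y, off) \<in> step_edges E' (1,0) {} (\<lambda>_. {})} = (\<lambda>e. padd c ` e) ` E'"
  proof
    show "{{p x, p y} | x y off. (x, y, off) \<in> step_edges E' (1,0) {} (\<lambda>_. {})} \<subseteq> (\<lambda>e. padd c ` e) ` E'"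
    proof
      fix f assume "f \<in> {{p x, p y} | x y off. (x, y, off) \<in> step_edges E' (1,0) {} (\<lambda>_. {})}"
      then obtain a b where ab: "{a,b} \<in> E'" "f = {p (Inl a), p (Inl b)}"
        unfolding step_edges_noops by auto
      then have "f = padd c ` {a,b}" by (simp add: p_def start_pos_def)
      with ab show "f \<in> (\<lambda>e. padd c ` e) ` E'" by blast
    qed
  next
    show "(\<lambda>e. padd c ` e) ` E' \<subseteq> {{p x, p y} | x y off. (x, y, off) \<in> step_edges E' (1,0) {} (\<lambda>_. {})}"
    proof
      fix f assume "f \<in> (\<lambda>e. padd c ` e) ` E'"
      then obtain e where e: "e \<in> E'" "f = padd c ` e" by auto
      with assms obtain a b where ab: "e = {a,b}" using grid_edges_elem by blast
      have "(Inl a, Inl b, psub b a) \<in> step_edges E' (1,0) {} (\<lambda>_. {})"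
        unfolding step_edges_noops using e ab by (cases a, cases b) auto
      moreover have "f = {p (Inl a), p (Inl b)}" using e ab by (simp add: p_def start_pos_def)
      ultimately show "f \<in> {{p x, p y} | x y off. (x, y, off) \<in> step_edges E' (1,0) {} (\<lambda>_. {})}"
        by blast
    qed
  qed
  show ?thesis unfolding growth_step_def fst_conv snd_conv
    apply (rule exI[of _ "(1,0)"], rule exI[of _ "{}"], rule exI[of _ "\<lambda>_. {}"], rule exI[of _ p])
    using vo cf nodes edges by simp
qed

lemma translate_cb:
  assumes "graph_connected V (grid_edges V)" "grid_edges V \<subseteq> E"
  shows "\<exists>Y. cb_step (V, E) Y \<and> fst Y = padd c ` V"
  using assms translate_growth[of "grid_edges V" V c] unfolding cb_step_def by force

definition reach :: "nat \<Rightarrow> pt set \<Rightarrow> bool" where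
  "reach k V \<longleftrightarrow> 1 \<le> k \<and> (\<exists>Sb Se :: nat \<Rightarrow> shape. Sb 1 = single_node \<and>
        (\<forall>t\<in>{1..k}. cb_step (Sb t) (Se t) \<and> Sb (Suc t) = AC (Se t)) \<and> fst (Se k) = V)"

lemma reach_ext:
  assumes r: "reach k V"
    and st: "\<And>E. grid_edges V \<subseteq> E \<Longrightarrow> \<exists>Y. cb_step (V, E) Y \<and> fst Y = W"
  shows "reach (Suc k) W"
proof -
  from r obtain Sb Se where k: "1 \<le> k" and s1: "Sb 1 = single_node"
    and all: "\<forall>t\<in>{1..k}. cb_step (Sb t) (Se t) \<and> Sb (Suc t) = AC (Se t)"
    and fk: "fst (Se k) = V" unfolding reach_def by blast
  have "grid_edges V \<subseteq> snd (AC (Se k))" unfolding AC_def fk[symmetric] by auto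
  moreover have "AC (Se k) = (V, snd (AC (Se k)))" unfolding AC_def using fk by simp
  ultimately obtain Y where Y: "cb_step (AC (Se k)) Y" "fst Y = W" using st by metis
  define Se' where "Se' = Se(Suc k := Y)"
  define Sb' where "Sb' = Sb(Suc (Suc k) := AC Y)"
  have "Sb' (Suc k) = AC (Se k)" using all k unfolding Sb'_def by auto
  have "\<forall>t\<in>{1..Suc k}. cb_step (Sb' t) (Se' t) \<and> Sb' (Suc t) = AC (Se' t)"
  proof
    fix t assume t: "t \<in> {1..Suc k}"
    show "cb_step (Sb' t) (Se' t) \<and> Sb' (Suc t) = AC (Se' t)"
    proof (cases "t = Suc k")
      case True
      then show ?thesis using \<open>Sb' (Suc k) = AC (Se k)\<close> Y unfolding Se'_def Sb'_def by simp
    next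
      case False
      then have "t \<in> {1..k}" using t by auto
      then show ?thesis using all False unfolding Se'_def Sb'_def by auto
    qed
  qed
  moreover have "Sb' 1 = single_node" using s1 unfolding Sb'_def by simp
  moreover have "fst (Se' (Suc k)) = W" using Y unfolding Se'_def by simp
  ultimately show ?thesis unfolding reach_def by auto
qed

lemma grid_edges_single: "grid_edges {q} = {}"
  unfolding grid_edges_def by (auto simp: adj_irrefl)

lemma reach_base: "reach 1 {q}"
proof -
  have gc: "graph_connected {(0,0)} (grid_edges {(0,0)})" unfolding graph_connected_def by auto
  obtain Y where Y: "cb_step single_node Y" "fst Y = padd q ` {(0,0)}"
    using translate_cb[OF gc, of "{}" q] unfolding single_node_def grid_edges_single by auto
  have "fst Y = {q}" using Y by (simp add: padd_def)
  define Sb where "Sb = (\<lambda>_::nat. single_node)(2 := AC Y)"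
  define Se where "Se = (\<lambda>_::nat. Y)"
  show ?thesis unfolding reach_def
    apply (rule conjI, simp, rule exI[of _ Sb], rule exI[of _ Se])
    using Y \<open>fst Y = {q}\<close> unfolding Sb_def Se_def by auto
qed

lemma grows_final:
  assumes r: "reach k (fst S)" and sh: "is_shape S"
  shows "grows_in single_node S (Suc k)"
proof -
  from r obtain Sb Se where k: "1 \<le> k" and s1: "Sb 1 = single_node"
    and all: "\<forall>t\<in>{1..k}. cb_step (Sb t) (Se t) \<and> Sb (Suc t) = AC (Se t)"
    and fk: "fst (Se k) = fst S" unfolding reach_def by blast
  have sub: "snd S \<subseteq> grid_edges (fst S)" and gc: "graph_connected (fst S) (snd S)"
    using sh unfolding is_shape_def by auto
  have g: "growth_step (fst S, snd S) (padd (0,0) ` fst S, (\<lambda>e. padd (0,0) ` e) ` snd S)"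
    using translate_growth[OF sub] .
  have pz: "padd (0,0) = id" by (auto simp: padd_def)
  have g2: "growth_step (fst S, snd S) S" using g unfolding pz by simp
  have "snd S \<subseteq> snd (AC (Se k))" using sub fk unfolding AC_def by auto
  moreover have "fst (AC (Se k)) = fst S" using fk unfolding AC_def by simp
  ultimately have cb: "cb_step (AC (Se k)) S"
    unfolding cb_step_def using gc g2 by (metis prod.collapse)
  define Se' where "Se' = Se(Suc k := S)"
  define Sb' where "Sb' = Sb(Suc (Suc k) := AC S)"
  have "Sb' (Suc k) = AC (Se k)" using all k unfolding Sb'_def by auto
  have "\<forall>t\<in>{1..Suc k}. cb_step (Sb' t) (Se' t) \<and> Sb' (Suc t) = AC (Se' t)"
  proof
    fix t assume t: "t \<in> {1..Suc k}"
    show "cb_step (Sb' t) (Se' t) \<and> Sb' (Suc t) = AC (Se' t)"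
    proof (cases "t = Suc k")
      case True
      then show ?thesis using \<open>Sb' (Suc k) = AC (Se k)\<close> cb unfolding Se'_def Sb'_def by simp
    next
      case False
      then have "t \<in> {1..k}" using t by auto
      then show ?thesis using all False unfolding Se'_def Sb'_def by auto
    qed
  qed
  moreover have "Sb' 1 = single_node" using s1 unfolding Sb'_def by simp
  moreover have "same_shape (Se' (Suc k)) S"
    unfolding Se'_def same_shape_def translate_def
    by (rule exI[of _ "(0,0)"]) (simp add: pz)
  ultimately show ?thesis unfolding grows_in_def by auto
qed

definition hx :: "pt \<Rightarrow> pt" where "hx p = (fst p div 2, snd p)"

lemma hx_cases: "p = (2 * fst (hx p), snd (hx p)) \<or> p = (2 * fst (hx p) + 1, snd (hx p))"
  unfolding hx_def by (cases p) auto

lemma traj_ineq: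
  fixes j1 j2 X1 X2 s :: real
  assumes "j1 \<le> j2" "X1 < X2" "0 < s" "s \<le> 1"
  shows "j1 + s * (X1 - j1) < j2 + s * (X2 - j2)"
proof -
  have "(1 - s) * j1 \<le> (1 - s) * j2" using assms by (intro mult_left_mono) auto
  moreover have "s * X1 < s * X2" using assms by simp
  ultimately show ?thesis by (simp add: algebra_simps)
qed

lemma halve_x:
  assumes conn: "graph_connected V (grid_edges V)" and Esup: "grid_edges (hx ` V) \<subseteq> E"
  shows "\<exists>Y. cb_step (hx ` V, E) Y \<and> fst Y = V"
proof -
  define T where "T = hx ` V"
  define A where "A = (\<lambda>t::pt. (2 * fst t, snd t))"
  define B where "B = (\<lambda>t::pt. (2 * fst t + 1, snd t))"
  define R where "R = (\<lambda>t w. \<exists>a b. a \<in> V \<and> b \<in> V \<and> adj a b \<and> hx a = t \<and> hx b = w \<and> t \<noteq> w)"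
  define E' where "E' = {{t,w} | t w. R t w}"
  define Ops where "Ops = {t\<in>T. A t \<in> V \<and> B t \<in> V}"
  define lo where "lo = (\<lambda>t. if A t \<in> V then A t else B t)"
  define H where "H = (\<lambda>t. {w. t \<in> Ops \<and> R t w \<and> fst w = fst t \<and> w \<notin> Ops \<and> B w \<in> V})"
  define p where "p = case_sum lo B"
  define d where "d = ((1::int), (0::int))"
  have Tmem: "t \<in> T \<longleftrightarrow> A t \<in> V \<or> B t \<in> V" for t
  proof
    assume "t \<in> T"
    then obtain a where a: "a \<in> V" "t = hx a" unfolding T_def by auto
    then show "A t \<in> V \<or> B t \<in> V" using hx_cases[of a] unfolding A_def B_def by metis
  next
    assume "A t \<in> V \<or> B t \<in> V"
    moreover have "hx (A t) = t" "hx (B t) = t" unfolding A_def B_def hx_def by auto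
    ultimately show "t \<in> T" unfolding T_def by (metis image_eqI)
  qed
  have Rsym: "R t w \<Longrightarrow> R w t" for t w unfolding R_def using adj_sym by metis
  have Rchar: "(snd w = snd t \<and> fst w = fst t + 1 \<and> B t \<in> V \<and> A w \<in> V) \<or>
       (snd w = snd t \<and> fst t = fst w + 1 \<and> B w \<in> V \<and> A t \<in> V) \<or>
       (fst w = fst t \<and> (snd w = snd t + 1 \<or> snd t = snd w + 1) \<and>
          ((A t \<in> V \<and> A w \<in> V) \<or> (B t \<in> V \<and> B w \<in> V)))" if "R t w" for t w
  proof -
    obtain a b where ab: "a \<in> V" "b \<in> V" "adj a b" "hx a = t" "hx b = w" "t \<noteq> w"
      using \<open>R t w\<close> unfolding R_def by blast
    obtain ax ay where a: "a = (ax, ay)" by (cases a)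
    obtain bx bz where b: "b = (bx, bz)" by (cases b)
    have t: "t = (ax div 2, ay)" and w: "w = (bx div 2, bz)" using ab a b unfolding hx_def by auto
    have ad: "\<bar>ax - bx\<bar> + \<bar>ay - bz\<bar> = 1" using ab(3) a b unfolding adj_def by simp
    have ne: "ax div 2 \<noteq> bx div 2 \<or> ay \<noteq> bz" using ab(6) t w by auto
    consider (r) "ay = bz" "bx = ax + 1" | (l) "ay = bz" "ax = bx + 1" | (v) "ax = bx" "\<bar>ay - bz\<bar> = 1"
      using ad by arith
    then show ?thesis
    proof cases
      case r
      then have "ax div 2 \<noteq> bx div 2" using ne by auto
      with r have "ax = 2 * (ax div 2) + 1" "bx = 2 * (bx div 2)" "bx div 2 = ax div 2 + 1" by presburger+
      then have "B t = a" "A w = b" using a b t w r unfolding A_def B_def by auto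
      then show ?thesis using r t w ab by auto
    next
      case l
      then have "ax div 2 \<noteq> bx div 2" using ne by auto
      with l have "bx = 2 * (bx div 2) + 1" "ax = 2 * (ax div 2)" "ax div 2 = bx div 2 + 1" by presburger+
      then have "B w = b" "A t = a" using a b t w l unfolding A_def B_def by auto
      then show ?thesis using l t w ab by auto
    next
      case v
      have "ax = 2 * (ax div 2) \<or> ax = 2 * (ax div 2) + 1" by presburger
      then have "(A t = a \<and> A w = b) \<or> (B t = a \<and> B w = b)"
        using a b t w v unfolding A_def B_def by auto
      then show ?thesis using v t w ab by auto
    qed
  qed
  have RT: "R t w \<Longrightarrow> t \<in> T \<and> w \<in> T" for t w unfolding R_def T_def by blast
  have E'mem: "{t,w} \<in> E' \<longleftrightarrow> R t w" for t w
  proof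
    assume "{t,w} \<in> E'"
    then obtain t' w' where "{t,w} = {t',w'}" "R t' w'" unfolding E'_def by blast
    then show "R t w" using Rsym[of t' w'] by (auto simp: doubleton_eq_iff)
  next
    assume "R t w" then show "{t,w} \<in> E'" unfolding E'_def by blast
  qed
  have E'grid: "E' \<subseteq> grid_edges T"
  proof
    fix e assume "e \<in> E'"
    then obtain t w where e: "e = {t,w}" "R t w" unfolding E'_def by auto
    have "adj t w" using Rchar[OF e(2)] unfolding adj_def by auto
    then show "e \<in> grid_edges T" using e RT grid_edges_mem by metis
  qed
  have path: "(hx a, hx b) \<in> {(t, w). {t, w} \<in> E'}\<^sup>*"
    if "(a, b) \<in> {(a, b). {a, b} \<in> grid_edges V}\<^sup>*" for a b
    using that
  proof (induction rule: rtrancl_induct)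
    case base then show ?case by simp
  next
    case (step b c)
    then have "b \<in> V" "c \<in> V" "adj b c" using grid_edges_mem by auto
    show ?case
    proof (cases "hx b = hx c")
      case True then show ?thesis using step by simp
    next
      case False
      then have "R (hx b) (hx c)" unfolding R_def using \<open>b \<in> V\<close> \<open>c \<in> V\<close> \<open>adj b c\<close> by blast
      then have "(hx b, hx c) \<in> {(t, w). {t, w} \<in> E'}" using E'mem by auto
      then show ?thesis using step by (meson rtrancl.rtrancl_into_rtrancl)
    qed
  qed
  have gcT: "graph_connected T E'"
    unfolding graph_connected_def
  proof (intro ballI)
    fix t1 t2 assume "t1 \<in> T" "t2 \<in> T"
    then obtain a1 a2 where "a1 \<in> V" "a2 \<in> V" "t1 = hx a1" "t2 = hx a2" unfolding T_def by auto
    then show "(t1, t2) \<in> {(a, b). {a, b} \<in> E'}\<^sup>*"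
      using conn path unfolding graph_connected_def by blast
  qed
  have vo: "valid_ops T E' d Ops H"
    unfolding valid_ops_def d_def unit_dirs_def
    by (auto simp: Ops_def H_def E'mem perp_def psub_def)
  have OpsT: "Ops \<subseteq> T" unfolding Ops_def by auto
  have cons: "psub (p y) (p x) = off" if xy: "(x, y, off) \<in> step_edges E' d Ops H" for x y off
  proof -
    from xy consider
      (ll) a b where "x = Inl a" "y = Inl b" "off = psub b a" "R a b"
         "\<not> (a \<in> Ops \<and> b = padd a d)" "\<not> (b \<in> Ops \<and> a = padd b d)"
         "\<not> (a \<in> Ops \<and> b \<in> H a)" "\<not> (b \<in> Ops \<and> a \<in> H b)"
      | (lr) u where "x = Inl u" "y = Inr u" "off = d" "u \<in> Ops"
      | (rl) u where "x = Inr u" "y = Inl (padd u d)" "off = d" "u \<in> Ops" "R u (padd u d)"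
      | (h) u w where "x = Inr u" "y = Inl w" "off = psub w u" "u \<in> Ops" "w \<in> H u"
      unfolding step_edges_def E'mem by blast
    then show ?thesis
    proof cases
      case ll
      note rc = Rchar[OF ll(4)]
      have aT: "a \<in> T" and bT: "b \<in> T" using RT ll(4) by auto
      show ?thesis
      proof -
        consider (r) "snd b = snd a" "fst b = fst a + 1" "B a \<in> V" "A b \<in> V"
          | (l) "snd b = snd a" "fst a = fst b + 1" "B b \<in> V" "A a \<in> V"
          | (v) "fst b = fst a" "snd b = snd a + 1 \<or> snd a = snd b + 1"
                "(A a \<in> V \<and> A b \<in> V) \<or> (B a \<in> V \<and> B b \<in> V)"
          using rc by blast
        then show ?thesis
        proof cases
          case r
          have "b = padd a d" using r unfolding padd_def d_def by (simp add: prod_eq_iff)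
          then have "a \<notin> Ops" using ll by auto
          then have "A a \<notin> V" using r aT unfolding Ops_def by auto
          then show ?thesis using r ll unfolding p_def lo_def A_def B_def psub_def by auto
        next
          case l
          have "a = padd b d" using l unfolding padd_def d_def by (simp add: prod_eq_iff)
          then have "b \<notin> Ops" using ll by auto
          then have "A b \<notin> V" using l bT unfolding Ops_def by auto
          then show ?thesis using l ll unfolding p_def lo_def A_def B_def psub_def by auto
        next
          case v
          have n1: "\<not> (A a \<in> V \<and> B a \<in> V \<and> A b \<notin> V \<and> B b \<in> V)"
          proof
            assume c: "A a \<in> V \<and> B a \<in> V \<and> A b \<notin> V \<and> B b \<in> V"
            then have "a \<in> Ops" "b \<notin> Ops" using aT unfolding Ops_def by auto
            then have "b \<in> H a" using c v ll(4) unfolding H_def by auto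
            then show False using ll \<open>a \<in> Ops\<close> by auto
          qed
          have n2: "\<not> (A b \<in> V \<and> B b \<in> V \<and> A a \<notin> V \<and> B a \<in> V)"
          proof
            assume c: "A b \<in> V \<and> B b \<in> V \<and> A a \<notin> V \<and> B a \<in> V"
            then have "b \<in> Ops" "a \<notin> Ops" using bT unfolding Ops_def by auto
            then have "a \<in> H b" using c v Rsym[OF ll(4)] unfolding H_def by auto
            then show False using ll \<open>b \<in> Ops\<close> by auto
          qed
          have "A a \<in> V \<longleftrightarrow> A b \<in> V" using v n1 n2 by blast
          then show ?thesis using v ll unfolding p_def lo_def A_def B_def psub_def by auto
        qed
      qed
    next
      case lr
      then show ?thesis unfolding p_def lo_def Ops_def A_def B_def psub_def d_def by auto
    next
      case rl
      note rc = Rchar[OF rl(5)]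
      have "A (padd u d) \<in> V" using rc unfolding padd_def d_def by auto
      then show ?thesis using rl unfolding p_def lo_def A_def B_def psub_def d_def padd_def by auto
    next
      case h
      then have w: "w \<notin> Ops" "B w \<in> V" "fst w = fst u" "R u w" unfolding H_def by auto
      then have "w \<in> T" using RT by blast
      then have "A w \<notin> V" using w unfolding Ops_def by auto
      then show ?thesis using h w unfolding p_def lo_def A_def B_def psub_def by auto
    qed
  qed
  have pos_snd: "snd (p n) = snd (start_pos n)" for n
    unfolding p_def lo_def A_def B_def start_pos_def by (cases n) auto
  have pos_fst: "2 * fst (start_pos n) \<le> fst (p n) \<and> fst (p n) \<le> 2 * fst (start_pos n) + 1" for n
    unfolding p_def lo_def A_def B_def start_pos_def by (cases n) auto
  have traj_fst: "fst (traj p n s) = real_of_int (fst (start_pos n)) + s * (real_of_int (fst (p n)) - real_of_int (fst (start_pos n)))" for n s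
    unfolding traj_def by simp
  have traj_snd: "snd (traj p n s) = real_of_int (snd (start_pos n))" for n s
    unfolding traj_def using pos_snd by simp
  have ord: "traj p x s \<noteq> traj p y s"
    if x: "x \<in> step_nodes T Ops" and y: "y \<in> step_nodes T Ops" and xy: "x \<noteq> y"
      and s: "0 < s" "s \<le> 1" for x y s
  proof (cases "snd (start_pos x) = snd (start_pos y)")
    case False
    then show ?thesis using traj_snd by (metis of_int_eq_iff)
  next
    case sy: True
    have key: "fst (traj p x' s) < fst (traj p y' s)"
      if "fst (start_pos x') \<le> fst (start_pos y')" "fst (p x') < fst (p y')" for x' y'
      unfolding traj_fst using traj_ineq[of "real_of_int (fst (start_pos x'))" "real_of_int (fst (start_pos y'))"
          "real_of_int (fst (p x'))" "real_of_int (fst (p y'))" s] that s by simp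
    show ?thesis
    proof (cases "fst (start_pos x) = fst (start_pos y)")
      case False
      then consider "fst (start_pos x) < fst (start_pos y)" | "fst (start_pos y) < fst (start_pos x)" by linarith
      then show ?thesis
      proof cases
        case 1
        then have "fst (p x) < fst (p y)" using pos_fst[of x] pos_fst[of y] by linarith
        then show ?thesis using key[of x y] 1 by force
      next
        case 2
        then have "fst (p y) < fst (p x)" using pos_fst[of x] pos_fst[of y] by linarith
        then show ?thesis using key[of y x] 2 by force
      qed
    next
      case True
      then have seq: "start_pos x = start_pos y" using sy by (simp add: prod_eq_iff)
      have "fst (p x) \<noteq> fst (p y)"
      proof
        assume pe: "fst (p x) = fst (p y)"
        from x y xy seq show False
          unfolding step_nodes_def start_pos_def
        proof (auto)
          fix u assume "x = Inl u" "y = Inr u" "u \<in> Ops"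
          then show False using pe unfolding p_def lo_def Ops_def A_def B_def by auto
        next
          fix u assume "x = Inr u" "y = Inl u" "u \<in> Ops"
          then show False using pe unfolding p_def lo_def Ops_def A_def B_def by auto
        qed
      qed
      then consider "fst (p x) < fst (p y)" | "fst (p y) < fst (p x)" by linarith
      then show ?thesis
      proof cases
        case 1 then show ?thesis using key[of x y] True by force
      next
        case 2 then show ?thesis using key[of y x] True by force
      qed
    qed
  qed
  have cf: "collision_free T E' d Ops H p"
    unfolding collision_free_def using cons ord by auto
  have nodes: "p ` step_nodes T Ops = V"
  proof
    show "p ` step_nodes T Ops \<subseteq> V"
    proof
      fix q assume "q \<in> p ` step_nodes T Ops"
      then consider t where "t \<in> T" "q = lo t" | t where "t \<in> Ops" "q = B t"
        unfolding step_nodes_def p_def by auto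
      then show "q \<in> V"
      proof cases
        case 1 then show ?thesis using Tmem unfolding lo_def by auto
      next
        case 2 then show ?thesis unfolding Ops_def by auto
      qed
    qed
  next
    show "V \<subseteq> p ` step_nodes T Ops"
    proof
      fix a assume a: "a \<in> V"
      have t: "hx a \<in> T" using a unfolding T_def by auto
      consider "a = A (hx a)" | "a = B (hx a)" using hx_cases[of a] unfolding A_def B_def by metis
      then show "a \<in> p ` step_nodes T Ops"
      proof cases
        case 1
        then have "lo (hx a) = a" using a unfolding lo_def by (metis)
        then have "p (Inl (hx a)) = a" unfolding p_def by simp
        then show ?thesis using t unfolding step_nodes_def by (metis UnI1 image_eqI)
      next
        case 2
        show ?thesis
        proof (cases "A (hx a) \<in> V")
          case True
          then have "hx a \<in> Ops" using 2 a t unfolding Ops_def by auto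
          moreover have "p (Inr (hx a)) = a" using 2 unfolding p_def by simp
          ultimately show ?thesis unfolding step_nodes_def by (metis UnI2 image_eqI)
        next
          case False
          then have "lo (hx a) = a" using 2 unfolding lo_def by simp
          then have "p (Inl (hx a)) = a" unfolding p_def by simp
          then show ?thesis using t unfolding step_nodes_def by (metis UnI1 image_eqI)
        qed
      qed
    qed
  qed
  have gs: "growth_step (T, E') (V, {{p x, p y} | x y off. (x, y, off) \<in> step_edges E' d Ops H})"
    unfolding growth_step_def fst_conv snd_conv
    using vo cf nodes by blast
  have "E' \<subseteq> E" using E'grid Esup unfolding T_def by auto
  then have "cb_step (T, E) (V, {{p x, p y} | x y off. (x, y, off) \<in> step_edges E' d Ops H})"
    unfolding cb_step_def using gcT gs by auto
  then show ?thesis unfolding T_def by auto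
qed

definition hy :: "pt \<Rightarrow> pt" where "hy p = (fst p, snd p div 2)"

lemma hy_cases: "p = (fst (hy p), 2 * snd (hy p)) \<or> p = (fst (hy p), 2 * snd (hy p) + 1)"
  unfolding hy_def by (cases p) auto

lemma halve_y:
  assumes conn: "graph_connected V (grid_edges V)" and Esup: "grid_edges (hy ` V) \<subseteq> E"
  shows "\<exists>Y. cb_step (hy ` V, E) Y \<and> fst Y = V"
proof -
  define T where "T = hy ` V"
  define A where "A = (\<lambda>t::pt. (fst t, 2 * snd t))"
  define B where "B = (\<lambda>t::pt. (fst t, 2 * snd t + 1))"
  define R where "R = (\<lambda>t w. \<exists>a b. a \<in> V \<and> b \<in> V \<and> adj a b \<and> hy a = t \<and> hy b = w \<and> t \<noteq> w)"
  define E' where "E' = {{t,w} | t w. R t w}"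
  define Ops where "Ops = {t\<in>T. A t \<in> V \<and> B t \<in> V}"
  define lo where "lo = (\<lambda>t. if A t \<in> V then A t else B t)"
  define H where "H = (\<lambda>t. {w. t \<in> Ops \<and> R t w \<and> snd w = snd t \<and> w \<notin> Ops \<and> B w \<in> V})"
  define p where "p = case_sum lo B"
  define d where "d = ((0::int), (1::int))"
  have Tmem: "t \<in> T \<longleftrightarrow> A t \<in> V \<or> B t \<in> V" for t
  proof
    assume "t \<in> T"
    then obtain a where a: "a \<in> V" "t = hy a" unfolding T_def by auto
    then show "A t \<in> V \<or> B t \<in> V" using hy_cases[of a] unfolding A_def B_def by metis
  next
    assume "A t \<in> V \<or> B t \<in> V"
    moreover have "hy (A t) = t" "hy (B t) = t" unfolding A_def B_def hy_def by auto
    ultimately show "t \<in> T" unfolding T_def by (metis image_eqI)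
  qed
  have Rsym: "R t w \<Longrightarrow> R w t" for t w unfolding R_def using adj_sym by metis
  have Rchar: "(fst w = fst t \<and> snd w = snd t + 1 \<and> B t \<in> V \<and> A w \<in> V) \<or>
       (fst w = fst t \<and> snd t = snd w + 1 \<and> B w \<in> V \<and> A t \<in> V) \<or>
       (snd w = snd t \<and> (fst w = fst t + 1 \<or> fst t = fst w + 1) \<and>
          ((A t \<in> V \<and> A w \<in> V) \<or> (B t \<in> V \<and> B w \<in> V)))" if "R t w" for t w
  proof -
    obtain a b where ab: "a \<in> V" "b \<in> V" "adj a b" "hy a = t" "hy b = w" "t \<noteq> w"
      using \<open>R t w\<close> unfolding R_def by blast
    obtain ax ay where a: "a = (ax, ay)" by (cases a)
    obtain bx bz where b: "b = (bx, bz)" by (cases b)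
    have t: "t = (ax, ay div 2)" and w: "w = (bx, bz div 2)" using ab a b unfolding hy_def by auto
    have ad: "\<bar>ax - bx\<bar> + \<bar>ay - bz\<bar> = 1" using ab(3) a b unfolding adj_def by simp
    have ne: "ay div 2 \<noteq> bz div 2 \<or> ax \<noteq> bx" using ab(6) t w by auto
    consider (r) "ax = bx" "bz = ay + 1" | (l) "ax = bx" "ay = bz + 1" | (v) "ay = bz" "\<bar>ax - bx\<bar> = 1"
      using ad by arith
    then show ?thesis
    proof cases
      case r
      then have "ay div 2 \<noteq> bz div 2" using ne by auto
      with r have "ay = 2 * (ay div 2) + 1" "bz = 2 * (bz div 2)" "bz div 2 = ay div 2 + 1" by presburger+
      then have "B t = a" "A w = b" using a b t w r unfolding A_def B_def by auto
      then show ?thesis using r t w ab by auto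
    next
      case l
      then have "ay div 2 \<noteq> bz div 2" using ne by auto
      with l have "bz = 2 * (bz div 2) + 1" "ay = 2 * (ay div 2)" "ay div 2 = bz div 2 + 1" by presburger+
      then have "B w = b" "A t = a" using a b t w l unfolding A_def B_def by auto
      then show ?thesis using l t w ab by auto
    next
      case v
      have "ay = 2 * (ay div 2) \<or> ay = 2 * (ay div 2) + 1" by presburger
      then have "(A t = a \<and> A w = b) \<or> (B t = a \<and> B w = b)"
        using a b t w v unfolding A_def B_def by auto
      then show ?thesis using v t w ab by auto
    qed
  qed
  have RT: "R t w \<Longrightarrow> t \<in> T \<and> w \<in> T" for t w unfolding R_def T_def by blast
  have E'mem: "{t,w} \<in> E' \<longleftrightarrow> R t w" for t w
  proof
    assume "{t,w} \<in> E'"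
    then obtain t' w' where "{t,w} = {t',w'}" "R t' w'" unfolding E'_def by blast
    then show "R t w" using Rsym[of t' w'] by (auto simp: doubleton_eq_iff)
  next
    assume "R t w" then show "{t,w} \<in> E'" unfolding E'_def by blast
  qed
  have E'grid: "E' \<subseteq> grid_edges T"
  proof
    fix e assume "e \<in> E'"
    then obtain t w where e: "e = {t,w}" "R t w" unfolding E'_def by auto
    have "adj t w" using Rchar[OF e(2)] unfolding adj_def by auto
    then show "e \<in> grid_edges T" using e RT grid_edges_mem by metis
  qed
  have path: "(hy a, hy b) \<in> {(t, w). {t, w} \<in> E'}\<^sup>*"
    if "(a, b) \<in> {(a, b). {a, b} \<in> grid_edges V}\<^sup>*" for a b
    using that
  proof (induction rule: rtrancl_induct)
    case base then show ?case by simp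
  next
    case (step b c)
    then have "b \<in> V" "c \<in> V" "adj b c" using grid_edges_mem by auto
    show ?case
    proof (cases "hy b = hy c")
      case True then show ?thesis using step by simp
    next
      case False
      then have "R (hy b) (hy c)" unfolding R_def using \<open>b \<in> V\<close> \<open>c \<in> V\<close> \<open>adj b c\<close> by blast
      then have "(hy b, hy c) \<in> {(t, w). {t, w} \<in> E'}" using E'mem by auto
      then show ?thesis using step by (meson rtrancl.rtrancl_into_rtrancl)
    qed
  qed
  have gcT: "graph_connected T E'"
    unfolding graph_connected_def
  proof (intro ballI)
    fix t1 t2 assume "t1 \<in> T" "t2 \<in> T"
    then obtain a1 a2 where "a1 \<in> V" "a2 \<in> V" "t1 = hy a1" "t2 = hy a2" unfolding T_def by auto
    then show "(t1, t2) \<in> {(a, b). {a, b} \<in> E'}\<^sup>*"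
      using conn path unfolding graph_connected_def by blast
  qed
  have vo: "valid_ops T E' d Ops H"
    unfolding valid_ops_def d_def unit_dirs_def
    by (auto simp: Ops_def H_def E'mem perp_def psub_def)
  have OpsT: "Ops \<subseteq> T" unfolding Ops_def by auto
  have cons: "psub (p y) (p x) = off" if xy: "(x, y, off) \<in> step_edges E' d Ops H" for x y off
  proof -
    from xy consider
      (ll) a b where "x = Inl a" "y = Inl b" "off = psub b a" "R a b"
         "\<not> (a \<in> Ops \<and> b = padd a d)" "\<not> (b \<in> Ops \<and> a = padd b d)"
         "\<not> (a \<in> Ops \<and> b \<in> H a)" "\<not> (b \<in> Ops \<and> a \<in> H b)"
      | (lr) u where "x = Inl u" "y = Inr u" "off = d" "u \<in> Ops"
      | (rl) u where "x = Inr u" "y = Inl (padd u d)" "off = d" "u \<in> Ops" "R u (padd u d)"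
      | (h) u w where "x = Inr u" "y = Inl w" "off = psub w u" "u \<in> Ops" "w \<in> H u"
      unfolding step_edges_def E'mem by blast
    then show ?thesis
    proof cases
      case ll
      note rc = Rchar[OF ll(4)]
      have aT: "a \<in> T" and bT: "b \<in> T" using RT ll(4) by auto
      show ?thesis
      proof -
        consider (r) "fst b = fst a" "snd b = snd a + 1" "B a \<in> V" "A b \<in> V"
          | (l) "fst b = fst a" "snd a = snd b + 1" "B b \<in> V" "A a \<in> V"
          | (v) "snd b = snd a" "fst b = fst a + 1 \<or> fst a = fst b + 1"
                "(A a \<in> V \<and> A b \<in> V) \<or> (B a \<in> V \<and> B b \<in> V)"
          using rc by blast
        then show ?thesis
        proof cases
          case r
          have "b = padd a d" using r unfolding padd_def d_def by (simp add: prod_eq_iff)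
          then have "a \<notin> Ops" using ll by auto
          then have "A a \<notin> V" using r aT unfolding Ops_def by auto
          then show ?thesis using r ll unfolding p_def lo_def A_def B_def psub_def by auto
        next
          case l
          have "a = padd b d" using l unfolding padd_def d_def by (simp add: prod_eq_iff)
          then have "b \<notin> Ops" using ll by auto
          then have "A b \<notin> V" using l bT unfolding Ops_def by auto
          then show ?thesis using l ll unfolding p_def lo_def A_def B_def psub_def by auto
        next
          case v
          have n1: "\<not> (A a \<in> V \<and> B a \<in> V \<and> A b \<notin> V \<and> B b \<in> V)"
          proof
            assume c: "A a \<in> V \<and> B a \<in> V \<and> A b \<notin> V \<and> B b \<in> V"
            then have "a \<in> Ops" "b \<notin> Ops" using aT unfolding Ops_def by auto
            then have "b \<in> H a" using c v ll(4) unfolding H_def by auto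
            then show False using ll \<open>a \<in> Ops\<close> by auto
          qed
          have n2: "\<not> (A b \<in> V \<and> B b \<in> V \<and> A a \<notin> V \<and> B a \<in> V)"
          proof
            assume c: "A b \<in> V \<and> B b \<in> V \<and> A a \<notin> V \<and> B a \<in> V"
            then have "b \<in> Ops" "a \<notin> Ops" using bT unfolding Ops_def by auto
            then have "a \<in> H b" using c v Rsym[OF ll(4)] unfolding H_def by auto
            then show False using ll \<open>b \<in> Ops\<close> by auto
          qed
          have "A a \<in> V \<longleftrightarrow> A b \<in> V" using v n1 n2 by blast
          then show ?thesis using v ll unfolding p_def lo_def A_def B_def psub_def by auto
        qed
      qed
    next
      case lr
      then show ?thesis unfolding p_def lo_def Ops_def A_def B_def psub_def d_def by auto
    next
      case rl
      note rc = Rchar[OF rl(5)]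
      have "A (padd u d) \<in> V" using rc unfolding padd_def d_def by auto
      then show ?thesis using rl unfolding p_def lo_def A_def B_def psub_def d_def padd_def by auto
    next
      case h
      then have w: "w \<notin> Ops" "B w \<in> V" "snd w = snd u" "R u w" unfolding H_def by auto
      then have "w \<in> T" using RT by blast
      then have "A w \<notin> V" using w unfolding Ops_def by auto
      then show ?thesis using h w unfolding p_def lo_def A_def B_def psub_def by auto
    qed
  qed
  have pos_snd: "fst (p n) = fst (start_pos n)" for n
    unfolding p_def lo_def A_def B_def start_pos_def by (cases n) auto
  have pos_fst: "2 * snd (start_pos n) \<le> snd (p n) \<and> snd (p n) \<le> 2 * snd (start_pos n) + 1" for n
    unfolding p_def lo_def A_def B_def start_pos_def by (cases n) auto
  have traj_fst: "snd (traj p n s) = real_of_int (snd (start_pos n)) + s * (real_of_int (snd (p n)) - real_of_int (snd (start_pos n)))" for n s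
    unfolding traj_def by simp
  have traj_snd: "fst (traj p n s) = real_of_int (fst (start_pos n))" for n s
    unfolding traj_def using pos_snd by simp
  have ord: "traj p x s \<noteq> traj p y s"
    if x: "x \<in> step_nodes T Ops" and y: "y \<in> step_nodes T Ops" and xy: "x \<noteq> y"
      and s: "0 < s" "s \<le> 1" for x y s
  proof (cases "fst (start_pos x) = fst (start_pos y)")
    case False
    then show ?thesis using traj_snd by (metis of_int_eq_iff)
  next
    case sy: True
    have key: "snd (traj p x' s) < snd (traj p y' s)"
      if "snd (start_pos x') \<le> snd (start_pos y')" "snd (p x') < snd (p y')" for x' y'
      unfolding traj_fst using traj_ineq[of "real_of_int (snd (start_pos x'))" "real_of_int (snd (start_pos y'))"
          "real_of_int (snd (p x'))" "real_of_int (snd (p y'))" s] that s by simp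
    show ?thesis
    proof (cases "snd (start_pos x) = snd (start_pos y)")
      case False
      then consider "snd (start_pos x) < snd (start_pos y)" | "snd (start_pos y) < snd (start_pos x)" by linarith
      then show ?thesis
      proof cases
        case 1
        then have "snd (p x) < snd (p y)" using pos_fst[of x] pos_fst[of y] by linarith
        then show ?thesis using key[of x y] 1 by force
      next
        case 2
        then have "snd (p y) < snd (p x)" using pos_fst[of x] pos_fst[of y] by linarith
        then show ?thesis using key[of y x] 2 by force
      qed
    next
      case True
      then have seq: "start_pos x = start_pos y" using sy by (simp add: prod_eq_iff)
      have "snd (p x) \<noteq> snd (p y)"
      proof
        assume pe: "snd (p x) = snd (p y)"
        from x y xy seq show False
          unfolding step_nodes_def start_pos_def
        proof (auto)
          fix u assume "x = Inl u" "y = Inr u" "u \<in> Ops"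
          then show False using pe unfolding p_def lo_def Ops_def A_def B_def by auto
        next
          fix u assume "x = Inr u" "y = Inl u" "u \<in> Ops"
          then show False using pe unfolding p_def lo_def Ops_def A_def B_def by auto
        qed
      qed
      then consider "snd (p x) < snd (p y)" | "snd (p y) < snd (p x)" by linarith
      then show ?thesis
      proof cases
        case 1 then show ?thesis using key[of x y] True by force
      next
        case 2 then show ?thesis using key[of y x] True by force
      qed
    qed
  qed
  have cf: "collision_free T E' d Ops H p"
    unfolding collision_free_def using cons ord by auto
  have nodes: "p ` step_nodes T Ops = V"
  proof
    show "p ` step_nodes T Ops \<subseteq> V"
    proof
      fix q assume "q \<in> p ` step_nodes T Ops"
      then consider t where "t \<in> T" "q = lo t" | t where "t \<in> Ops" "q = B t"
        unfolding step_nodes_def p_def by auto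
      then show "q \<in> V"
      proof cases
        case 1 then show ?thesis using Tmem unfolding lo_def by auto
      next
        case 2 then show ?thesis unfolding Ops_def by auto
      qed
    qed
  next
    show "V \<subseteq> p ` step_nodes T Ops"
    proof
      fix a assume a: "a \<in> V"
      have t: "hy a \<in> T" using a unfolding T_def by auto
      consider "a = A (hy a)" | "a = B (hy a)" using hy_cases[of a] unfolding A_def B_def by metis
      then show "a \<in> p ` step_nodes T Ops"
      proof cases
        case 1
        then have "lo (hy a) = a" using a unfolding lo_def by (metis)
        then have "p (Inl (hy a)) = a" unfolding p_def by simp
        then show ?thesis using t unfolding step_nodes_def by (metis UnI1 image_eqI)
      next
        case 2
        show ?thesis
        proof (cases "A (hy a) \<in> V")
          case True
          then have "hy a \<in> Ops" using 2 a t unfolding Ops_def by auto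
          moreover have "p (Inr (hy a)) = a" using 2 unfolding p_def by simp
          ultimately show ?thesis unfolding step_nodes_def by (metis UnI2 image_eqI)
        next
          case False
          then have "lo (hy a) = a" using 2 unfolding lo_def by simp
          then have "p (Inl (hy a)) = a" unfolding p_def by simp
          then show ?thesis using t unfolding step_nodes_def by (metis UnI1 image_eqI)
        qed
      qed
    qed
  qed
  have gs: "growth_step (T, E') (V, {{p x, p y} | x y off. (x, y, off) \<in> step_edges E' d Ops H})"
    unfolding growth_step_def fst_conv snd_conv
    using vo cf nodes by blast
  have "E' \<subseteq> E" using E'grid Esup unfolding T_def by auto
  then have "cb_step (T, E) (V, {{p x, p y} | x y off. (x, y, off) \<in> step_edges E' d Ops H})"
    unfolding cb_step_def using gcT gs by auto
  then show ?thesis unfolding T_def by auto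
qed

abbreviation conn :: "pt set \<Rightarrow> bool" where "conn V \<equiv> graph_connected V (grid_edges V)"

lemma conn_image:
  assumes c: "conn V" and f: "\<And>a b. a \<in> V \<Longrightarrow> b \<in> V \<Longrightarrow> adj a b \<Longrightarrow> f a = f b \<or> adj (f a) (f b)"
  shows "conn (f ` V)"
proof -
  have path: "(f a, f b) \<in> {(x, y). {x, y} \<in> grid_edges (f ` V)}\<^sup>*"
    if "(a, b) \<in> {(a, b). {a, b} \<in> grid_edges V}\<^sup>*" for a b
    using that
  proof (induction rule: rtrancl_induct)
    case base then show ?case by simp
  next
    case (step b c)
    then have "b \<in> V" "c \<in> V" "adj b c" using grid_edges_mem by auto
    then consider "f b = f c" | "adj (f b) (f c)" using f by blast
    then show ?case
    proof cases
      case 1 then show ?thesis using step by simp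
    next
      case 2
      then have "{f b, f c} \<in> grid_edges (f ` V)" using grid_edges_mem \<open>b \<in> V\<close> \<open>c \<in> V\<close> by blast
      then show ?thesis using step by (meson rtrancl.rtrancl_into_rtrancl case_prodI mem_Collect_eq)
    qed
  qed
  show ?thesis unfolding graph_connected_def
  proof (intro ballI)
    fix t1 t2 assume "t1 \<in> f ` V" "t2 \<in> f ` V"
    then obtain a1 a2 where "a1 \<in> V" "a2 \<in> V" "t1 = f a1" "t2 = f a2" by auto
    then show "(t1, t2) \<in> {(a, b). {a, b} \<in> grid_edges (f ` V)}\<^sup>*"
      using c path unfolding graph_connected_def by blast
  qed
qed

lemma conn_padd: "conn V \<Longrightarrow> conn (padd c ` V)"
  by (rule conn_image) (auto simp: adj_def padd_def)

lemma conn_hx: "conn V \<Longrightarrow> conn (hx ` V)"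
proof (rule conn_image)
  fix a b assume "adj a b"
  then show "hx a = hx b \<or> adj (hx a) (hx b)"
    proof -
    obtain ax ay where a: "a = (ax, ay)" by (cases a)
    obtain bx bz where b: "b = (bx, bz)" by (cases b)
    have ad: "\<bar>ax - bx\<bar> + \<bar>ay - bz\<bar> = 1" using \<open>adj a b\<close> a b unfolding adj_def by simp
    consider "ay = bz" "\<bar>ax - bx\<bar> = 1" | "ax = bx" "\<bar>ay - bz\<bar> = 1" using ad by arith
    then show ?thesis
    proof cases
      case 1
      then have "ax div 2 = bx div 2 \<or> \<bar>ax div 2 - bx div 2\<bar> = 1" by presburger
      then show ?thesis using 1 a b unfolding adj_def hx_def by auto
    next
      case 2 then show ?thesis using a b unfolding adj_def hx_def by auto
    qed
  qed
qed

lemma conn_hy: "conn V \<Longrightarrow> conn (hy ` V)"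
proof (rule conn_image)
  fix a b assume "adj a b"
  then show "hy a = hy b \<or> adj (hy a) (hy b)"
    proof -
    obtain ax ay where a: "a = (ax, ay)" by (cases a)
    obtain bx bz where b: "b = (bx, bz)" by (cases b)
    have ad: "\<bar>ax - bx\<bar> + \<bar>ay - bz\<bar> = 1" using \<open>adj a b\<close> a b unfolding adj_def by simp
    consider "ax = bx" "\<bar>ay - bz\<bar> = 1" | "ay = bz" "\<bar>ax - bx\<bar> = 1" using ad by arith
    then show ?thesis
    proof cases
      case 1
      then have "ay div 2 = bz div 2 \<or> \<bar>ay div 2 - bz div 2\<bar> = 1" by presburger
      then show ?thesis using 1 a b unfolding adj_def hy_def by auto
    next
      case 2 then show ?thesis using a b unfolding adj_def hy_def by auto
    qed
  qed
qed

lemma padd_inv: "padd c ` padd (- fst c, - snd c) ` V = V"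
  by (auto simp: padd_def image_image)

definition fitsx :: "pt set \<Rightarrow> nat \<Rightarrow> bool" where
  "fitsx V N \<longleftrightarrow> (\<exists>a. \<forall>q\<in>V. a \<le> fst q \<and> fst q < a + int N)"

definition fitsy :: "pt set \<Rightarrow> nat \<Rightarrow> bool" where
  "fitsy V N \<longleftrightarrow> (\<exists>a. \<forall>q\<in>V. a \<le> snd q \<and> snd q < a + int N)"

lemma reach_single:
  assumes "V \<noteq> {}" "fitsx V 1" "fitsy V 1" shows "reach 1 V"
proof -
  obtain a b where a: "\<forall>q\<in>V. a \<le> fst q \<and> fst q < a + 1" and b: "\<forall>q\<in>V. b \<le> snd q \<and> snd q < b + 1"
    using assms unfolding fitsx_def fitsy_def by auto
  have "V \<subseteq> {(a,b)}"
  proof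
    fix q assume "q \<in> V" then have "fst q = a" "snd q = b" using a b by force+
    then show "q \<in> {(a,b)}" by (simp add: prod_eq_iff)
  qed
  then have "V = {(a,b)}" using assms(1) by blast
  then show ?thesis using reach_base by simp
qed

lemma mainY:
  "V \<noteq> {} \<Longrightarrow> conn V \<Longrightarrow> fitsx V 1 \<Longrightarrow> fitsy V (2^n) \<Longrightarrow> \<exists>k. reach k V \<and> k \<le> 1 + 2 * n"
proof (induction n arbitrary: V)
  case 0
  then show ?case using reach_single by auto
next
  case (Suc n)
  obtain b where b: "\<forall>q\<in>V. b \<le> snd q \<and> snd q < b + int (2^Suc n)"
    using Suc.prems unfolding fitsy_def by auto
  define V0 where "V0 = padd (- 0, - b) ` V"
  define T where "T = hy ` V0"
  have cV0: "conn V0" unfolding V0_def using conn_padd Suc.prems by blast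
  have cT: "conn T" unfolding T_def using conn_hy cV0 by blast
  have neT: "T \<noteq> {}" unfolding T_def V0_def using Suc.prems by auto
  have fxT: "fitsx T 1"
  proof -
    obtain a where a: "\<forall>q\<in>V. a \<le> fst q \<and> fst q < a + 1" using Suc.prems unfolding fitsx_def by auto
    then show ?thesis unfolding fitsx_def T_def V0_def
      by (intro exI[of _ a]) (auto simp: hy_def padd_def)
  qed
  have fyT: "fitsy T (2^n)" unfolding fitsy_def
  proof (intro exI[of _ 0] ballI)
    fix q assume "q \<in> T"
    then obtain r where r: "r \<in> V" "q = hy (padd (0, - b) r)" unfolding T_def V0_def by auto
    have "0 \<le> snd r - b" "snd r - b < 2 * 2^n" using b r by auto
    then have "0 \<le> (snd r - b) div 2" "(snd r - b) div 2 < 2^n" by linarith+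
    then show "0 \<le> snd q \<and> snd q < 0 + int (2^n)" using r by (simp add: hy_def padd_def)
  qed
  obtain k where k: "reach k T" "k \<le> 1 + 2 * n" using Suc.IH[OF neT cT fxT fyT] by auto
  have r1: "reach (Suc k) V0"
    using reach_ext[OF k(1)[unfolded T_def] halve_y[OF cV0]] .
  have "reach (Suc (Suc k)) (padd (0, b) ` V0)"
    using reach_ext[OF r1 translate_cb[OF cV0]] .
  moreover have "padd (0, b) ` V0 = V" unfolding V0_def using padd_inv[of "(0,b)" V] by simp
  ultimately show ?case using k by (intro exI[of _ "Suc (Suc k)"]) auto
qed


lemma mainX:
  "V \<noteq> {} \<Longrightarrow> conn V \<Longrightarrow> fitsx V (2^m) \<Longrightarrow> fitsy V (2^n) \<Longrightarrow> \<exists>k. reach k V \<and> k \<le> 1 + 2 * m + 2 * n"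
proof (induction m arbitrary: V)
  case 0
  then show ?case using mainY by auto
next
  case (Suc m)
  obtain a where a: "\<forall>q\<in>V. a \<le> fst q \<and> fst q < a + int (2^Suc m)"
    using Suc.prems unfolding fitsx_def by auto
  define V0 where "V0 = padd (- a, - 0) ` V"
  define T where "T = hx ` V0"
  have cV0: "conn V0" unfolding V0_def using conn_padd Suc.prems by blast
  have cT: "conn T" unfolding T_def using conn_hx cV0 by blast
  have neT: "T \<noteq> {}" unfolding T_def V0_def using Suc.prems by auto
  have fyT: "fitsy T (2^n)"
  proof -
    obtain b where b: "\<forall>q\<in>V. b \<le> snd q \<and> snd q < b + int (2^n)" using Suc.prems unfolding fitsy_def by auto
    then show ?thesis unfolding fitsy_def T_def V0_def
      by (intro exI[of _ b]) (auto simp: hx_def padd_def)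
  qed
  have fxT: "fitsx T (2^m)" unfolding fitsx_def
  proof (intro exI[of _ 0] ballI)
    fix q assume "q \<in> T"
    then obtain r where r: "r \<in> V" "q = hx (padd (- a, 0) r)" unfolding T_def V0_def by auto
    have "0 \<le> fst r - a" "fst r - a < 2 * 2^m" using a r by auto
    then have "0 \<le> (fst r - a) div 2" "(fst r - a) div 2 < 2^m" by linarith+
    then show "0 \<le> fst q \<and> fst q < 0 + int (2^m)" using r by (simp add: hx_def padd_def)
  qed
  obtain k where k: "reach k T" "k \<le> 1 + 2 * m + 2 * n" using Suc.IH[OF neT cT fxT fyT] by auto
  have r1: "reach (Suc k) V0"
    using reach_ext[OF k(1)[unfolded T_def] halve_x[OF cV0]] .
  have "reach (Suc (Suc k)) (padd (a, 0) ` V0)"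
    using reach_ext[OF r1 translate_cb[OF cV0]] .
  moreover have "padd (a, 0) ` V0 = V" unfolding V0_def using padd_inv[of "(a,0)" V] by simp
  ultimately show ?case using k by (intro exI[of _ "Suc (Suc k)"]) auto
qed

lemma conn_interval:
  fixes g :: "pt \<Rightarrow> int"
  assumes c: "conn V" and aV: "a \<in> V" and qV: "q \<in> V"
    and g: "\<And>x y. adj x y \<Longrightarrow> \<bar>g x - g y\<bar> \<le> 1"
  shows "g a \<le> v \<Longrightarrow> v \<le> g q \<Longrightarrow> v \<in> g ` V"
proof -
  have "(a, q) \<in> {(a, b). {a, b} \<in> grid_edges V}\<^sup>*" using c aV qV unfolding graph_connected_def by blast
  then have "\<forall>v. g a \<le> v \<and> v \<le> g q \<longrightarrow> v \<in> g ` V"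
  proof (induction rule: rtrancl_induct)
    case base then show ?case using aV by force
  next
    case (step q r)
    then have rV: "r \<in> V" and ad: "adj q r" using grid_edges_mem by auto
    have "\<bar>g q - g r\<bar> \<le> 1" using g ad by blast
    show ?case
    proof (intro allI impI)
      fix v assume v: "g a \<le> v \<and> v \<le> g r"
      show "v \<in> g ` V"
      proof (cases "v \<le> g q")
        case True then show ?thesis using step.IH v by blast
      next
        case False
        then have "v = g r" using v \<open>\<bar>g q - g r\<bar> \<le> 1\<close> by linarith
        then show ?thesis using rV by blast
      qed
    qed
  qed
  then show "g a \<le> v \<Longrightarrow> v \<le> g q \<Longrightarrow> v \<in> g ` V" by blast
qed

lemma fits_card:
  fixes g :: "pt \<Rightarrow> int"
  assumes c: "conn V" and fin: "finite V" and ne: "V \<noteq> {}"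
    and g: "\<And>x y. adj x y \<Longrightarrow> \<bar>g x - g y\<bar> \<le> 1"
  shows "\<exists>a0. \<forall>q\<in>V. a0 \<le> g q \<and> g q < a0 + int (card (g ` V))"
proof -
  define lo where "lo = Min (g ` V)"
  define hi where "hi = Max (g ` V)"
  have f: "finite (g ` V)" "g ` V \<noteq> {}" using fin ne by auto
  have "lo \<in> g ` V" "hi \<in> g ` V" unfolding lo_def hi_def using f by auto
  then obtain a q where a: "a \<in> V" "g a = lo" and q: "q \<in> V" "g q = hi" by auto
  have "{lo..hi} \<subseteq> g ` V"
    using conn_interval[OF c a(1) q(1) g] a q by auto
  then have "card {lo..hi} \<le> card (g ` V)" using f card_mono by blast
  then have cc: "hi - lo + 1 \<le> int (card (g ` V))" by simp
  show ?thesis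
  proof (intro exI[of _ lo] ballI)
    fix r assume "r \<in> V"
    then have "lo \<le> g r" "g r \<le> hi" unfolding lo_def hi_def using f by auto
    then show "lo \<le> g r \<and> g r < lo + int (card (g ` V))" using cc by linarith
  qed
qed

lemma exists_m:
  fixes w :: nat assumes "1 \<le> w"
  shows "\<exists>m. w \<le> 2^m \<and> real m \<le> log 2 (real w) + 1"
proof -
  have ex: "\<exists>m. w \<le> 2^m" using less_exp[of w] by (intro exI[of _ w]) simp
  define m where "m = (LEAST m. w \<le> 2^m)"
  have wm: "w \<le> 2^m" unfolding m_def using ex by (rule LeastI_ex)
  have lg: "0 \<le> log 2 (real w)" using assms by simp
  show ?thesis
  proof (cases m)
    case 0 then show ?thesis using wm lg by (intro exI[of _ 0]) auto
  next
    case (Suc m')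
    have "\<not> w \<le> 2^m'" using Suc unfolding m_def
      by (metis Least_le Suc_n_not_le_n)
    then have "2^m' < w" by simp
    then have "real m' < log 2 (real w)" using less_log2_of_power by blast
    then show ?thesis using wm Suc by (intro exI[of _ m]) auto
  qed
qed

lemma fitsx_mono: "fitsx V N \<Longrightarrow> N \<le> N' \<Longrightarrow> fitsx V N'"
  unfolding fitsx_def by (meson add_left_mono less_le_trans of_nat_le_iff)

lemma fitsy_mono: "fitsy V N \<Longrightarrow> N \<le> N' \<Longrightarrow> fitsy V N'"
  unfolding fitsy_def by (meson add_left_mono less_le_trans of_nat_le_iff)

theorem theorem4p2:
  "\<exists>C::real. \<forall>S. is_shape S \<longrightarrow>
     (\<exists>tf. grows_in single_node S tf \<and>
           real tf \<le> C * (1 + log 2 (real (num_rows S)) + log 2 (real (num_cols S))))"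
proof -
  have main: "\<exists>tf. grows_in single_node S tf \<and>
           real tf \<le> 6 * (1 + log 2 (real (num_rows S)) + log 2 (real (num_cols S)))"
    if sh: "is_shape S" for S
  proof -
  define V where "V = fst S"
  have fin: "finite V" and ne: "V \<noteq> {}" and sub: "snd S \<subseteq> grid_edges V"
    and gc: "graph_connected V (snd S)" using sh unfolding is_shape_def V_def by auto
  have c: "conn V" using graph_connected_mono[OF gc sub] .
  define w where "w = num_cols S"
  define l where "l = num_rows S"
  have w1: "1 \<le> w" unfolding w_def num_cols_def V_def[symmetric] using fin ne
    by (simp add: Suc_leI card_gt_0_iff)
  have l1: "1 \<le> l" unfolding l_def num_rows_def V_def[symmetric] using fin ne
    by (simp add: Suc_leI card_gt_0_iff)
  have fx: "fitsx V w" unfolding fitsx_def w_def num_cols_def V_def[symmetric]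
    using fits_card[OF c fin ne, of fst] unfolding adj_def by force
  have fy: "fitsy V l" unfolding fitsy_def l_def num_rows_def V_def[symmetric]
    using fits_card[OF c fin ne, of snd] unfolding adj_def by force
  obtain m where m: "w \<le> 2^m" "real m \<le> log 2 (real w) + 1" using exists_m[OF w1] by blast
  obtain n where n: "l \<le> 2^n" "real n \<le> log 2 (real l) + 1" using exists_m[OF l1] by blast
  obtain k where k: "reach k V" "k \<le> 1 + 2 * m + 2 * n"
    using mainX[OF ne c fitsx_mono[OF fx m(1)] fitsy_mono[OF fy n(1)]] by blast
  have g: "grows_in single_node S (Suc k)" using grows_final[OF k(1)[unfolded V_def] sh] .
  have lw: "0 \<le> log 2 (real w)" "0 \<le> log 2 (real l)" using w1 l1 by auto
  have "real (Suc k) \<le> 2 + 2 * real m + 2 * real n" using k(2) by linarith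
  also have "\<dots> \<le> 6 * (1 + log 2 (real l) + log 2 (real w))" using m(2) n(2) lw by (simp add: algebra_simps)
  finally have bnd: "real (Suc k) \<le> 6 * (1 + log 2 (real l) + log 2 (real w))" .
  show "\<exists>tf. grows_in single_node S tf \<and>
           real tf \<le> 6 * (1 + log 2 (real (num_rows S)) + log 2 (real (num_cols S)))"
    using g bnd unfolding l_def w_def by blast
  qed
  show ?thesis by (rule exI[of _ "6::real"]) (blast intro: main)
qed

end
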